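(* Let $n\ge1$, $\delta_1\in[0,1)$, $\delta_2\ge0$, and assume $n\ge2$, or $n=1$ and $\delta_1\in[0,1/2)$. Then there is $\lambda>0$ such that \[ \int_{[-1,1]^n}\Big(|x|^{2\delta_1}|\nabla\psi(x)|^2+(\pi/2)^2|x|^{2\delta_2}\psi(x)^2\Big)dx\ \ge\ \lambda\int_{[-1,1]^n}\psi(x)^2\,dx \] for all $\psi\in C_c^1(\mathbb R^n)$.
   Context: $|x|$ denotes the Euclidean norm of $x\in\mathbb R^n$. *)

theory Defs
  imports "HOL-Analysis.Analysis"
begin

text \<open>Power weight |x|^(2d) with the convention |0|^0 = 1 (Isabelle's powr has 0 powr 0 = 0).\<close>
definition normpow :: "'a::real_normed_vector \<Rightarrow> real \<Rightarrow> real" where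
  "normpow x a = (if x = 0 then (if a = 0 then 1 else 0) else norm x powr a)"

definition C1c_with_grad :: "(real^'n \<Rightarrow> real) \<Rightarrow> (real^'n \<Rightarrow> real^'n) \<Rightarrow> bool" where
  "C1c_with_grad \<psi> G \<longleftrightarrow>
     (\<forall>x. GDERIV \<psi> x :> G x) \<and> continuous_on UNIV G \<and> compact (closure {x. \<psi> x \<noteq> 0})"

end

theory Submission imports Defs begin

lemma normpow_cont:
  assumes "a \<ge> 0"
  shows "continuous_on UNIV (\<lambda>x::'a::real_normed_vector. normpow x a)"
proof (cases "a = 0")
  case True
  then have "(\<lambda>x::'a. normpow x a) = (\<lambda>x. 1)" by (auto simp: normpow_def fun_eq_iff)
  then show ?thesis by (metis continuous_on_const)
next
  case False
  then have eq: "(\<lambda>x::'a. normpow x a) = (\<lambda>x. norm x powr a)" by (auto simp: normpow_def fun_eq_iff)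
  show ?thesis unfolding eq
    using False assms by (intro continuous_on_powr' continuous_intros) auto
qed

lemma normpow_nonneg: "normpow x a \<ge> 0"
  by (simp add: normpow_def)

lemma cont_scale:
  assumes "continuous_on UNIV (F :: 'a::real_normed_vector \<Rightarrow> real)"
  shows "continuous_on S (\<lambda>(x, r::real). F (r *\<^sub>R x))"
proof -
  have "continuous_on S (\<lambda>z. F ((\<lambda>(x, r::real). r *\<^sub>R x) z))"
    by (rule continuous_on_compose2[OF assms]) (auto simp: case_prod_beta intro!: continuous_intros)
  then show ?thesis by (simp add: case_prod_beta)
qed

abbreviation cube :: "real \<Rightarrow> (real^'n) set" where
  "cube r \<equiv> cbox (\<chi> i. -r) (\<chi> i. r)"

lemma scale_eq:
  fixes F :: "real^'n \<Rightarrow> real"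
  assumes "continuous_on UNIV F" "r > 0"
  shows "integral (cube r) F = r ^ CARD('n) * integral (cube 1) (\<lambda>x. F (r *\<^sub>R x))"
proof -
  have "(F has_integral integral (cube r) F) (cube r)"
    by (intro integrable_integral integrable_continuous continuous_on_subset[OF assms(1)]) auto
  from has_integral_affinity'[OF this assms(2), of 0]
  have "((\<lambda>x. F (r *\<^sub>R x)) has_integral integral (cube r) F /\<^sub>R r ^ CARD('n)) (cbox ((\<chi> i. -r) /\<^sub>R r) ((\<chi> i. r) /\<^sub>R r))"
    using assms(2) by simp
  moreover have "(\<chi> i. -r) /\<^sub>R r = ((\<chi> i. -1)::real^'n)" "(\<chi> i. r) /\<^sub>R r = ((\<chi> i. 1)::real^'n)"
    using assms(2) by (simp_all add: vec_eq_iff)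
  ultimately have "((\<lambda>x. F (r *\<^sub>R x)) has_integral integral (cube r) F /\<^sub>R r ^ CARD('n)) (cube 1)"
    by simp
  then show ?thesis using assms(2) by (simp add: integral_unique)
qed

lemma cube_sub: "0 \<le> r \<Longrightarrow> r \<le> s \<Longrightarrow> cube r \<subseteq> cube s"
proof
  fix x :: "real^'n" assume "0 \<le> r" "r \<le> s" "x \<in> cube r"
  then have "\<forall>i. - r \<le> x $ i \<and> x $ i \<le> r" by (simp add: mem_box_cart)
  have "\<forall>i. - s \<le> x $ i \<and> x $ i \<le> s"
  proof
    fix i show "- s \<le> x $ i \<and> x $ i \<le> s" using spec[OF \<open>\<forall>i. - r \<le> x $ i \<and> x $ i \<le> r\<close>, of i] \<open>r \<le> s\<close> by linarith
  qed
  then show "x \<in> cube s" by (simp add: mem_box_cart)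
qed

lemma scale_le:
  fixes F :: "real^'n \<Rightarrow> real"
  assumes "continuous_on UNIV F" "\<And>x. F x \<ge> 0" "0 < \<rho>" "\<rho> \<le> r" "r \<le> 1"
  shows "integral (cube 1) (\<lambda>x. F (r *\<^sub>R x)) \<le> integral (cube 1) F / \<rho> ^ CARD('n)"
proof -
  have r: "r > 0" using assms by auto
  have "integral (cube 1) (\<lambda>x. F (r *\<^sub>R x)) = integral (cube r) F / r ^ CARD('n)"
    using scale_eq[OF assms(1) r] r by simp
  also have "integral (cube r) F \<le> integral (cube 1) F"
    using assms by (intro integral_subset_le cube_sub integrable_continuous continuous_on_subset[OF assms(1)]) auto
  hence "integral (cube r) F / r ^ CARD('n) \<le> integral (cube 1) F / r ^ CARD('n)"
    using r by (simp add: divide_right_mono)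
  also have "\<dots> \<le> integral (cube 1) F / \<rho> ^ CARD('n)"
    using assms by (intro divide_left_mono integral_nonneg integrable_continuous continuous_on_subset[OF assms(1)] power_mono mult_pos_pos) auto
  finally show ?thesis .
qed

lemma ftc:
  fixes \<psi> :: "real^'n \<Rightarrow> real"
  assumes C: "C1c_with_grad \<psi> G" and "0 < \<rho>" "\<rho> \<le> 1"
  shows "(\<psi> x)^2 - (\<psi> (\<rho> *\<^sub>R x))^2 = integral {\<rho>..1} (\<lambda>r. 2 * \<psi> (r *\<^sub>R x) * (G (r *\<^sub>R x) \<bullet> x))"
proof -
  have d: "(\<psi> has_derivative (\<lambda>h. h \<bullet> G y)) (at y)" for y
    using C by (simp add: C1c_with_grad_def gderiv_def)
  have d1: "((\<lambda>r. \<psi> (r *\<^sub>R x)) has_real_derivative (G (r *\<^sub>R x) \<bullet> x)) (at r)" for r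
  proof -
    have "((\<lambda>r::real. r *\<^sub>R x) has_derivative (\<lambda>h. h *\<^sub>R x)) (at r)"
      by (auto intro!: derivative_eq_intros)
    from has_derivative_compose[OF this d]
    have "((\<lambda>r. \<psi> (r *\<^sub>R x)) has_derivative (\<lambda>h. (h *\<^sub>R x) \<bullet> G (r *\<^sub>R x))) (at r)" .
    moreover have "(\<lambda>h. (h *\<^sub>R x) \<bullet> G (r *\<^sub>R x)) = (*) (G (r *\<^sub>R x) \<bullet> x)"
      by (auto simp: fun_eq_iff inner_commute)
    ultimately show ?thesis by (simp add: has_field_derivative_def)
  qed
  have d2: "((\<lambda>r. (\<psi> (r *\<^sub>R x))^2) has_real_derivative 2 * \<psi> (r *\<^sub>R x) * (G (r *\<^sub>R x) \<bullet> x)) (at r)" for r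
    using DERIV_mult[OF d1 d1, of r] by (simp add: power2_eq_square algebra_simps)
  have "((\<lambda>r. 2 * \<psi> (r *\<^sub>R x) * (G (r *\<^sub>R x) \<bullet> x)) has_integral (\<psi> (1 *\<^sub>R x))^2 - (\<psi> (\<rho> *\<^sub>R x))^2) {\<rho>..1}"
    using assms(3) by (intro fundamental_theorem_of_calculus)
      (auto intro!: has_real_derivative_iff_has_vector_derivative[THEN iffD1] DERIV_subset[OF d2])
  then show ?thesis by (simp add: integral_unique)
qed

lemma norm_cube: "x \<in> cube 1 \<Longrightarrow> norm (x::real^'n) \<le> real CARD('n)"
proof -
  assume "x \<in> cube 1"
  then have "\<bar>x $ i\<bar> \<le> 1" for i by (simp add: mem_box_cart abs_le_iff)
  then have "sum (\<lambda>i. \<bar>x$i\<bar>) UNIV \<le> sum (\<lambda>i. 1) (UNIV::'n set)"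
    by (intro sum_mono) auto
  then show ?thesis using norm_le_l1_cart[of x] by simp
qed

lemma normbound:
  fixes x :: "real^'n"
  assumes "x \<in> cube 1" "0 < \<rho>" "\<rho> \<le> r" "r \<le> 1" "0 \<le> \<delta>" "\<delta> \<le> 1"
  shows "(norm x)^2 \<le> (real CARD('n) / \<rho>)^2 * normpow (r *\<^sub>R x) (2*\<delta>)"
proof (cases "x = 0")
  case True
  then show ?thesis by (simp add: normpow_nonneg)
next
  case False
  define N where "N = real CARD('n)"
  have N1: "N \<ge> 1" by (simp add: N_def)
  have nx: "norm x \<le> N" using norm_cube[OF assms(1)] by (simp add: N_def)
  define t where "t = \<rho> * norm x / N"
  have t0: "t > 0" using False assms N1 by (simp add: t_def)
  have t1: "t \<le> 1"
  proof -
    have "\<rho> * norm x \<le> 1 * N" using nx assms by (intro mult_mono) auto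
    then show ?thesis using N1 by (simp add: t_def)
  qed
  have tr: "t \<le> norm (r *\<^sub>R x)"
  proof -
    have "\<rho> * norm x / N \<le> \<rho> * norm x" using divide_left_mono[of 1 N "\<rho> * norm x"] N1 assms by simp
    also have "\<dots> \<le> r * norm x" using assms by (intro mult_right_mono) auto
    finally show ?thesis using assms by (simp add: t_def)
  qed
  have "t^2 = t powr 2" using powr_realpow[OF t0, of 2] by simp
  also have "\<dots> \<le> t powr (2*\<delta>)" using assms t0 t1 by (intro powr_mono') auto
  also have "\<dots> \<le> norm (r *\<^sub>R x) powr (2*\<delta>)" using assms t0 tr by (intro powr_mono2) auto
  also have "\<dots> = normpow (r *\<^sub>R x) (2*\<delta>)" using False assms by (simp add: normpow_def)
  finally have "t^2 \<le> normpow (r *\<^sub>R x) (2*\<delta>)" .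
  then have "(N/\<rho>)^2 * t^2 \<le> (N/\<rho>)^2 * normpow (r *\<^sub>R x) (2*\<delta>)" by (simp add: mult_left_mono)
  moreover have "(N/\<rho>)^2 * t^2 = (norm x)^2" using N1 assms by (simp add: t_def field_simps power2_eq_square)
  ultimately show ?thesis by (simp add: N_def)
qed

lemma pw:
  fixes x g :: "real^'n"
  assumes "x \<in> cube 1" "0 < \<rho>" "\<rho> \<le> r" "r \<le> 1" "0 \<le> \<delta>" "\<delta> \<le> 1"
  shows "- (2 * p * (g \<bullet> x)) \<le> (1/2) * p^2 + 2 * (real CARD('n) / \<rho>)^2 * (normpow (r *\<^sub>R x) (2*\<delta>) * (norm g)^2)"
proof -
  define u where "u = g \<bullet> x"
  have a: "- (2 * p * u) \<le> (1/2) * p^2 + 2 * u^2"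
    using zero_le_square[of "p + 2*u"] by (simp add: power2_eq_square algebra_simps)
  have "\<bar>u\<bar> \<le> \<bar>norm g * norm x\<bar>"
    unfolding u_def using Cauchy_Schwarz_ineq2[of g x] by simp
  then have "u^2 \<le> (norm g)^2 * (norm x)^2"
    by (metis abs_le_square_iff power_mult_distrib)
  also have "\<dots> \<le> (norm g)^2 * ((real CARD('n) / \<rho>)^2 * normpow (r *\<^sub>R x) (2*\<delta>))"
    using normbound[OF assms] by (intro mult_left_mono) auto
  finally have "u^2 \<le> (real CARD('n) / \<rho>)^2 * (normpow (r *\<^sub>R x) (2*\<delta>) * (norm g)^2)"
    by (simp add: algebra_simps)
  with a show ?thesis unfolding u_def by linarith
qed

lemma cont_r:
  assumes "continuous_on UNIV (F :: 'a::real_normed_vector \<Rightarrow> 'b::topological_space)"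
  shows "continuous_on S (\<lambda>r::real. F (r *\<^sub>R x))"
  by (rule continuous_on_compose2[OF assms]) (auto intro!: continuous_intros)

lemma cont_c:
  assumes "continuous_on UNIV (F :: 'a::real_normed_vector \<Rightarrow> 'b::topological_space)"
  shows "continuous_on S (\<lambda>x. F (r *\<^sub>R x))"
  by (rule continuous_on_compose2[OF assms]) (auto intro!: continuous_intros)

lemma cont_scale2:
  assumes "continuous_on UNIV (F :: 'a::real_normed_vector \<Rightarrow> real)"
  shows "continuous_on S (\<lambda>(r::real, x). F (r *\<^sub>R x))"
proof -
  have "continuous_on S (\<lambda>z. F ((\<lambda>(r::real, x). r *\<^sub>R x) z))"
    by (rule continuous_on_compose2[OF assms]) (auto simp: case_prod_beta intro!: continuous_intros)
  then show ?thesis by (simp add: case_prod_beta)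
qed

theorem lemma3p2:
  fixes \<delta>1 \<delta>2 :: real
  assumes "0 \<le> \<delta>1" and "\<delta>1 < 1" and "0 \<le> \<delta>2"
    and "CARD('n::finite) \<ge> 2 \<or> (CARD('n) = 1 \<and> \<delta>1 < 1/2)"
  shows "\<exists>lam>0. \<forall>(\<psi>::real^'n \<Rightarrow> real) G. C1c_with_grad \<psi> G \<longrightarrow>
           integral (cbox (\<chi> i. -1) (\<chi> i. 1))
             (\<lambda>x. normpow x (2*\<delta>1) * (norm (G x))^2 + (pi/2)^2 * normpow x (2*\<delta>2) * (\<psi> x)^2)
           \<ge> lam * integral (cbox (\<chi> i. -1) (\<chi> i. 1)) (\<lambda>x. (\<psi> x)^2)"
proof -
  define \<rho> :: real where "\<rho> = 1/2"
  define N where "N = real CARD('n)"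
  define K where "K = (N / \<rho>)^2"
  define c where "c = 1 / (\<rho> powr (2*\<delta>2))"
  define M where "M = 4*K + 4*c/(pi/2)^2"
  have N1: "N \<ge> 1" by (simp add: N_def)
  have K0: "K \<ge> 0" by (simp add: K_def)
  have c0: "c > 0" by (simp add: c_def \<rho>_def)
  have "4*c/(pi/2)^2 > 0" using c0 by simp
  then have M0: "M > 0" using K0 by (simp add: M_def)
  show ?thesis
  proof (intro exI[of _ "1/M"] conjI allI impI)
    show "1/M > 0" using M0 by simp
    fix \<psi> :: "real^'n \<Rightarrow> real" and G
    assume C: "C1c_with_grad \<psi> G"
    let ?Q = "cube 1 :: (real^'n) set"
    define w1 where "w1 = (\<lambda>x::real^'n. normpow x (2*\<delta>1))"
    define w2 where "w2 = (\<lambda>x::real^'n. normpow x (2*\<delta>2))"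
    have cpsi: "continuous_on UNIV \<psi>"
    proof -
      have "(\<psi> has_derivative (\<lambda>h. h \<bullet> G y)) (at y)" for y
        using C by (simp add: C1c_with_grad_def gderiv_def)
      then show ?thesis
        by (intro continuous_at_imp_continuous_on) (auto intro: has_derivative_continuous)
    qed
    have cG: "continuous_on UNIV G" using C by (simp add: C1c_with_grad_def)
    have cw1: "continuous_on UNIV w1" unfolding w1_def using assms by (intro normpow_cont) auto
    have cw2: "continuous_on UNIV w2" unfolding w2_def using assms by (intro normpow_cont) auto
    define f1 where "f1 = (\<lambda>x. (\<psi> x)^2)"
    define f2 where "f2 = (\<lambda>x. w1 x * (norm (G x))^2)"
    define f3 where "f3 = (\<lambda>x. w2 x * (\<psi> x)^2)"
    have cf1: "continuous_on UNIV f1" unfolding f1_def by (intro continuous_on_power cpsi)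
    have cf2: "continuous_on UNIV f2" unfolding f2_def by (intro continuous_on_mult continuous_on_power cw1 continuous_on_norm cG)
    have cf3: "continuous_on UNIV f3" unfolding f3_def by (intro continuous_on_mult continuous_on_power cw2 cpsi)
    have f1p: "f1 x \<ge> 0" for x by (simp add: f1_def)
    have f2p: "f2 x \<ge> 0" for x by (simp add: f2_def w1_def normpow_nonneg)
    have f3p: "f3 x \<ge> 0" for x by (simp add: f3_def w2_def normpow_nonneg)
    have int: "continuous_on UNIV f \<Longrightarrow> f integrable_on cube r" for f :: "real^'n \<Rightarrow> real" and r
      by (meson integrable_continuous continuous_on_subset subset_UNIV)
    define A where "A = integral ?Q f1"
    define B where "B = integral ?Q f2"
    define P where "P = integral ?Q f3"
    have B0: "B \<ge> 0" unfolding B_def using f2p int[OF cf2] by (intro integral_nonneg) auto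
    have P0: "P \<ge> 0" unfolding P_def using f3p int[OF cf3] by (intro integral_nonneg) auto
    have I: "integral ?Q (\<lambda>x. normpow x (2*\<delta>1) * (norm (G x))^2 + (pi/2)^2 * normpow x (2*\<delta>2) * (\<psi> x)^2)
          = B + (pi/2)^2 * P"
    proof -
      have "((\<lambda>x. f2 x + (pi/2)^2 * f3 x) has_integral B + (pi/2)^2 * P) ?Q"
        unfolding B_def P_def
        by (intro has_integral_add has_integral_mult_right integrable_integral int cf2 cf3)
      moreover have "(\<lambda>x. normpow x (2*\<delta>1) * (norm (G x))^2 + (pi/2)^2 * normpow x (2*\<delta>2) * (\<psi> x)^2) = (\<lambda>x. f2 x + (pi/2)^2 * f3 x)"
        unfolding f2_def f3_def w1_def w2_def by (rule ext) (simp only: mult.assoc)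
      ultimately show ?thesis using integral_unique by metis
    qed
    define F0 where "F0 = (\<lambda>y. (1/2) * f1 y + 2*K * f2 y)"
    have cF0: "continuous_on UNIV F0" unfolding F0_def by (intro continuous_on_add continuous_on_mult continuous_on_const cf1 cf2)
    have F0p: "F0 y \<ge> 0" for y unfolding F0_def using f1p[of y] f2p[of y] K0 by simp
    have \<rho>0: "0 < \<rho>" "\<rho> \<le> 1" by (auto simp: \<rho>_def)
    have ivl: "cbox \<rho> 1 = {\<rho>..1}" by (simp add: cbox_interval)
    have step2: "f1 (\<rho> *\<^sub>R x) \<le> f1 x + integral {\<rho>..1} (\<lambda>r. F0 (r *\<^sub>R x))" if x: "x \<in> ?Q" for x
    proof -
      have e: "f1 x - f1 (\<rho> *\<^sub>R x) = integral {\<rho>..1} (\<lambda>r. 2 * \<psi> (r *\<^sub>R x) * (G (r *\<^sub>R x) \<bullet> x))"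
        unfolding f1_def using ftc[OF C \<rho>0] .
      have "integral {\<rho>..1} (\<lambda>r. - (2 * \<psi> (r *\<^sub>R x) * (G (r *\<^sub>R x) \<bullet> x))) \<le> integral {\<rho>..1} (\<lambda>r. F0 (r *\<^sub>R x))"
      proof (rule integral_le)
        have c1: "continuous_on {\<rho>..1} (\<lambda>r. \<psi> (r *\<^sub>R x))" by (rule cont_r[OF cpsi])
        have c2: "continuous_on {\<rho>..1} (\<lambda>r. G (r *\<^sub>R x))" by (rule cont_r[OF cG])
        show "(\<lambda>r. - (2 * \<psi> (r *\<^sub>R x) * (G (r *\<^sub>R x) \<bullet> x))) integrable_on {\<rho>..1}"
          by (intro integrable_continuous_interval continuous_on_minus continuous_on_mult continuous_on_const c1 continuous_on_inner c2 continuous_on_id)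
        show "(\<lambda>r. F0 (r *\<^sub>R x)) integrable_on {\<rho>..1}"
          by (intro integrable_continuous_interval cont_r[OF cF0])
        fix r assume r: "r \<in> {\<rho>..1}"
        show "- (2 * \<psi> (r *\<^sub>R x) * (G (r *\<^sub>R x) \<bullet> x)) \<le> F0 (r *\<^sub>R x)"
          using pw[OF x \<rho>0(1) _ _ assms(1), of r "\<psi> (r *\<^sub>R x)" "G (r *\<^sub>R x)"] r assms(2)
          by (simp add: F0_def f1_def f2_def w1_def K_def N_def)
      qed
      moreover have "integral {\<rho>..1} (\<lambda>r. - (2 * \<psi> (r *\<^sub>R x) * (G (r *\<^sub>R x) \<bullet> x))) = - integral {\<rho>..1} (\<lambda>r. 2 * \<psi> (r *\<^sub>R x) * (G (r *\<^sub>R x) \<bullet> x))"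
        by (rule integral_neg)
      ultimately show ?thesis using e by linarith
    qed
    have contpar: "continuous_on UNIV (\<lambda>x. integral (cbox \<rho> 1) (\<lambda>r. F0 (r *\<^sub>R x)))"
      by (rule integral_continuous_on_param[of UNIV \<rho> 1 "\<lambda>x r. F0 (r *\<^sub>R x)", OF cont_scale[OF cF0]])
    have step3: "integral ?Q (\<lambda>x. f1 (\<rho> *\<^sub>R x)) \<le> A + integral ?Q (\<lambda>x. integral (cbox \<rho> 1) (\<lambda>r. F0 (r *\<^sub>R x)))"
    proof -
      have "integral ?Q (\<lambda>x. f1 (\<rho> *\<^sub>R x)) \<le> integral ?Q (\<lambda>x. f1 x + integral (cbox \<rho> 1) (\<lambda>r. F0 (r *\<^sub>R x)))"
        by (rule integral_le[OF int[OF cont_c[OF cf1]] int[OF continuous_on_add[OF cf1 contpar]]]) (use step2 in \<open>simp add: ivl\<close>)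
      also have "\<dots> = A + integral ?Q (\<lambda>x. integral (cbox \<rho> 1) (\<lambda>r. F0 (r *\<^sub>R x)))"
        unfolding A_def by (intro integral_add int cf1 contpar)
      finally show ?thesis .
    qed
    have step4: "integral ?Q (\<lambda>x. integral (cbox \<rho> 1) (\<lambda>r. F0 (r *\<^sub>R x))) = integral (cbox \<rho> 1) (\<lambda>r. integral ?Q (\<lambda>x. F0 (r *\<^sub>R x)))"
      by (rule integral_swap_continuous[of "\<chi> i. -1" \<rho> "\<chi> i. 1" 1 "\<lambda>x r. F0 (r *\<^sub>R x)", OF cont_scale[OF cF0]])
    have IF0: "integral ?Q F0 = A/2 + 2*K*B"
    proof -
      have "(F0 has_integral (1/2) * A + 2*K*B) ?Q" unfolding F0_def A_def B_def
        by (intro has_integral_add has_integral_mult_right integrable_integral int cf1 cf2)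
      then show ?thesis by (simp add: integral_unique)
    qed
    have step5: "integral (cbox \<rho> 1) (\<lambda>r. integral ?Q (\<lambda>x. F0 (r *\<^sub>R x))) \<le> (1 - \<rho>) * ((A/2 + 2*K*B) / \<rho> ^ CARD('n))"
    proof -
      have cp2: "continuous_on UNIV (\<lambda>r. integral ?Q (\<lambda>x. F0 (r *\<^sub>R x)))"
        by (rule integral_continuous_on_param[of UNIV _ _ "\<lambda>r x. F0 (r *\<^sub>R x)", OF cont_scale2[OF cF0]])
      have "integral {\<rho>..1} (\<lambda>r. integral ?Q (\<lambda>x. F0 (r *\<^sub>R x))) \<le> integral {\<rho>..1} (\<lambda>r. (A/2 + 2*K*B) / \<rho> ^ CARD('n))"
      proof (rule integral_le)
        show "(\<lambda>r. integral ?Q (\<lambda>x. F0 (r *\<^sub>R x))) integrable_on {\<rho>..1}"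
          by (intro integrable_continuous_interval continuous_on_subset[OF cp2]) auto
        fix r assume "r \<in> {\<rho>..1}"
        then show "integral ?Q (\<lambda>x. F0 (r *\<^sub>R x)) \<le> (A/2 + 2*K*B) / \<rho> ^ CARD('n)"
          using scale_le[OF cF0 F0p \<rho>0(1)] IF0 by simp
      qed (rule integrable_const_ivl)
      then show ?thesis using \<rho>0 by (simp add: ivl)
    qed
    have step6: "integral (cube \<rho>) f1 = \<rho> ^ CARD('n) * integral ?Q (\<lambda>x. f1 (\<rho> *\<^sub>R x))"
      by (rule scale_eq[OF cf1 \<rho>0(1)])
    have inner: "integral (cube \<rho>) f1 \<le> \<rho> ^ CARD('n) * A + (1 - \<rho>) * (A/2 + 2*K*B)"
    proof -
      have "integral (cube \<rho>) f1 \<le> \<rho> ^ CARD('n) * (A + (1 - \<rho>) * ((A/2 + 2*K*B) / \<rho> ^ CARD('n)))"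
        unfolding step6 using step3 step4 step5 \<rho>0 by (intro mult_left_mono) auto
      also have "\<dots> = \<rho> ^ CARD('n) * A + (1 - \<rho>) * (A/2 + 2*K*B)"
        using \<rho>0 by (simp add: field_simps)
      finally show ?thesis .
    qed
    have A0: "A \<ge> 0" unfolding A_def using f1p int[OF cf1] by (intro integral_nonneg) auto
    have sub: "cube \<rho> \<subseteq> ?Q" using \<rho>0 by (intro cube_sub) auto
    have \<rho>p: "\<rho> powr (2*\<delta>2) > 0" by (simp add: \<rho>_def)
    have pt: "f1 x \<le> (if x \<in> cube \<rho> then f1 x else 0) + c * f3 x" if "x \<in> ?Q" for x
    proof (cases "x \<in> cube \<rho>")
      case True
      then show ?thesis using c0 f3p[of x] by simp
    next
      case False
      then obtain i where "\<not> (- \<rho> \<le> x $ i \<and> x $ i \<le> \<rho>)" by (auto simp: mem_box_cart)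
      then have "\<rho> < \<bar>x $ i\<bar>" by auto
      also have "\<dots> \<le> norm x" by (rule component_le_norm_cart)
      finally have nx: "\<rho> < norm x" .
      then have x0: "x \<noteq> 0" using \<rho>0 by auto
      have "\<rho> powr (2*\<delta>2) \<le> norm x powr (2*\<delta>2)"
        using nx \<rho>0 assms(3) by (intro powr_mono2) auto
      also have "\<dots> = w2 x" using x0 by (simp add: w2_def normpow_def)
      finally have "\<rho> powr (2*\<delta>2) \<le> w2 x" .
      then have "1 \<le> c * w2 x" using \<rho>p by (simp add: c_def field_simps)
      then have "1 * f1 x \<le> (c * w2 x) * f1 x" using f1p[of x] by (intro mult_right_mono) auto
      then show ?thesis using False by (simp add: f3_def f1_def mult.assoc)
    qed
    have step7: "A \<le> integral (cube \<rho>) f1 + c * P"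
    proof -
      have ir: "(\<lambda>x. if x \<in> cube \<rho> then f1 x else 0) integrable_on ?Q"
        using sub int[OF cf1, of \<rho>] by (simp add: integrable_restrict_Int Int_absorb2)
      have ic: "(\<lambda>x. c * f3 x) integrable_on ?Q" using integrable_on_cmult_left[OF int[OF cf3], of c] by simp
      have "A \<le> integral ?Q (\<lambda>x. (if x \<in> cube \<rho> then f1 x else 0) + c * f3 x)"
      proof -
        show ?thesis unfolding A_def by (rule integral_le[OF int[OF cf1] integrable_add[OF ir ic]]) (use pt in auto)
      qed
      also have "\<dots> = integral ?Q (\<lambda>x. if x \<in> cube \<rho> then f1 x else 0) + c * P"
        unfolding P_def by (simp add: integral_add[OF ir ic])
      also have "integral ?Q (\<lambda>x. if x \<in> cube \<rho> then f1 x else 0) = integral (cube \<rho>) f1"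
        using sub by (simp add: integral_restrict_Int Int_absorb2)
      finally show ?thesis .
    qed
    have pw2: "\<rho> ^ CARD('n) \<le> 1/2"
    proof -
      have "\<rho> ^ CARD('n) \<le> \<rho> ^ 1" using \<rho>0 by (intro power_decreasing) auto
      then show ?thesis by (simp add: \<rho>_def)
    qed
    have "A \<le> (3/4) * A + K * B + c * P"
    proof -
      have "\<rho> ^ CARD('n) * A \<le> (1/2) * A" using pw2 A0 by (intro mult_right_mono) auto
      then show ?thesis using step7 inner by (simp add: \<rho>_def algebra_simps)
    qed
    then have AB: "A \<le> 4*K*B + 4*c*P" by simp
    have "4*K*B \<le> M*B" using B0 c0 by (intro mult_right_mono) (auto simp: M_def)
    moreover have "4*c*P \<le> (M*(pi/2)^2)*P"
    proof (intro mult_right_mono P0)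
      have "M*(pi/2)^2 = 4*K*(pi/2)^2 + 4*c" by (simp add: M_def field_simps)
      then show "4*c \<le> M*(pi/2)^2" using K0 by simp
    qed
    ultimately have "A \<le> M * (B + (pi/2)^2 * P)" using AB by (simp add: algebra_simps)
    then have "1/M * A \<le> B + (pi/2)^2 * P" using M0 by (simp add: field_simps)
    then show "integral (cube 1) (\<lambda>x. normpow x (2*\<delta>1) * (norm (G x))^2 + (pi/2)^2 * normpow x (2*\<delta>2) * (\<psi> x)^2) \<ge> 1/M * integral (cube 1) (\<lambda>x. (\<psi> x)^2)"
      using I unfolding A_def f1_def by simp
  qed
qed

end
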